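(* Let $\alpha\ge1$ and consider the WBDF3 coefficients $(a_0,a_1,a_2)=(\tfrac32\alpha+\tfrac13,\ \tfrac56-2\alpha,\ \tfrac12\alpha-\tfrac16)$, $(b_0,\dots,b_3)=(\alpha,1-\alpha,0,0)$, $(c_0,c_1,c_2)=(2\alpha+1,-3\alpha,\alpha)$. Then $$\sigma_{\mathrm{F}}=1,\quad\sigma_{\mathrm{E}}=\frac{3(6\alpha+1)}{2(6\alpha-1)},\quad\lambda_{\mathrm{I}}=\frac{3(2\alpha-1)}{2(6\alpha-1)},\quad\text{so that}\quad\mathfrak{I}_{\mathrm{IE}}=\frac{2\alpha-1}{6\alpha+1}.$$
   Context: For coefficient vectors $(a_j)_{j=0}^{\mathrm{k}-1}$, $(b_j)_{j=0}^{\mathrm{k}}$, $(c_j)_{j=0}^{\mathrm{k}-1}$ define $a(\theta)=\sum_j a_je^{\imath j\theta}$, $b(\theta)=\sum_j b_je^{\imath j\theta}$, $c(\theta)=\sum_jc_je^{\imath j\theta}$ and $\sigma_{\mathrm{F}}=\max_{\theta\in[0,2\pi)}|1/a(\theta)|$, $\sigma_{\mathrm{E}}=\max_{\theta\in[0,2\pi)}|c(\theta)/a(\theta)|$, $\lambda_{\mathrm{I}}=\min_{\theta\in[0,2\pi)}\Re[b(\theta)/a(\theta)]$, $\mathfrak{I}_{\mathrm{IE}}=\lambda_{\mathrm{I}}/\sigma_{\mathrm{E}}$. Here $\mathrm{k}=3$. *)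

theory Defs
  imports "HOL-Analysis.Analysis"
begin

definition trigpoly :: "real list \<Rightarrow> real \<Rightarrow> complex" where
  "trigpoly cs \<theta> = (\<Sum>j<length cs. complex_of_real (cs ! j) * exp (\<i> * of_nat j * complex_of_real \<theta>))"

text \<open>The max over [0, 2 pi) is rendered as the supremum (resp. infimum) over that set.\<close>
definition sigmaF :: "real list \<Rightarrow> real" where
  "sigmaF a = (SUP \<theta>\<in>{0..<2*pi}. cmod (1 / trigpoly a \<theta>))"

definition sigmaE :: "real list \<Rightarrow> real list \<Rightarrow> real" where
  "sigmaE a c = (SUP \<theta>\<in>{0..<2*pi}. cmod (trigpoly c \<theta> / trigpoly a \<theta>))"

definition lambdaI :: "real list \<Rightarrow> real list \<Rightarrow> real" where
  "lambdaI a b = (INF \<theta>\<in>{0..<2*pi}. Re (trigpoly b \<theta> / trigpoly a \<theta>))"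

definition IIE :: "real list \<Rightarrow> real list \<Rightarrow> real list \<Rightarrow> real" where
  "IIE a b c = lambdaI a b / sigmaE a c"

end

theory Submission
  imports Defs
begin
lemma trig3: "trigpoly [p,q,r] th = Complex (p + q * cos th + r * (2 * (cos th)^2 - 1)) (sin th  *  (q + 2 * r * cos th))"
proof -
  have "trigpoly [p,q,r] th = Complex (p + q * cos th + r * cos(2 * th)) (q  *  sin th + r  *  sin(2 * th))"
    by (simp add: trigpoly_def eval_nat_numeral lessThan_Suc complex_eq_iff Re_exp Im_exp mult.commute)
  moreover have cd: "cos (2 * th) = 2 * (cos th)^2 - 1" by (rule cos_double_cos)
  moreover have sd: "sin (2 * th) = 2 * sin th * cos th" by (rule sin_double)
  ultimately show ?thesis unfolding cd sd by (simp add: algebra_simps)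
qed
lemma trig4: "trigpoly [p,q,0,0] th = Complex (p + q * cos th) (sin th  *  q)"
  by (simp add: trigpoly_def eval_nat_numeral lessThan_Suc complex_eq_iff Re_exp Im_exp mult.commute)

lemma lin_nonneg: "(x::real) \<ge> -1 \<Longrightarrow> x \<le> 1 \<Longrightarrow> u - v \<ge> 0 \<Longrightarrow> u + v \<ge> 0 \<Longrightarrow> u + v * x \<ge> 0"
proof -
  assume h: "x \<ge> -1" "x \<le> 1" "u - v \<ge> 0" "u + v \<ge> 0"
  have "u + v * x = ((1+x) * (u+v) + (1-x) * (u-v))/2" by (simp add: algebra_simps)
  moreover have "(1+x) * (u+v) \<ge> 0" "(1-x) * (u-v) \<ge> 0" using h by simp_all
  ultimately show ?thesis by (simp add: field_simps)
qed

lemma alg: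
  fixes al x s :: real
  assumes al: "al \<ge> 1" and s: "s^2 = 1 - x^2" and x: "-1 \<le> x" "x \<le> 1"
  defines "ra \<equiv> (3/2 * al + 1/3) + (5/6 - 2 * al) * x + (1/2 * al - 1/6) * (2 * x^2-1)"
      and "ia \<equiv> s * ((5/6 - 2 * al) + 2 * (1/2 * al - 1/6) * x)"
      and "rc \<equiv> (2 * al + 1) + (-3 * al) * x + al * (2 * x^2-1)"
      and "ic \<equiv> s * ((-3 * al) + 2 * al * x)"
      and "rb \<equiv> al + (1-al) * x"
      and "ib \<equiv> s * (1-al)"
  shows "ra^2 + ia^2 \<ge> 1"
    and "(rc^2 + ic^2) * (4 * (6 * al-1)^2) \<le> 9 * (6 * al+1)^2 * (ra^2+ia^2)"
    and "2 * (6 * al-1) * (rb * ra + ib * ia) \<ge> 3 * (2 * al-1) * (ra^2+ia^2)"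
proof -
  have a2: "al^2 \<ge> al" using al by (simp add: power2_eq_square)
  have a3: "al^3 \<ge> al^2" using al by (simp add: power_increasing)
  have a4: "al^4 \<ge> al^3" using al by (simp add: power_increasing)
  have A: "ra^2 + ia^2 = (3/2 * al + 1/3 + (5/6 - 2 * al) * x + (1/2 * al - 1/6) * (2 * x^2-1))^2
      + (1-x^2) * ((5/6 - 2 * al) + 2 * (1/2 * al - 1/6) * x)^2"
    unfolding ra_def ia_def by (simp add: power_mult_distrib s)
  have C: "rc^2 + ic^2 = ((2 * al + 1) + (-3 * al) * x + al * (2 * x^2-1))^2 + (1-x^2) * ((-3 * al) + 2 * al * x)^2"
    unfolding rc_def ic_def by (simp add: power_mult_distrib s)
  have R: "rb * ra + ib * ia = (al + (1-al) * x) * ((3/2 * al + 1/3) + (5/6 - 2 * al) * x + (1/2 * al - 1/6) * (2 * x^2-1))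
      + (1-x^2) * (1-al) * ((5/6 - 2 * al) + 2 * (1/2 * al - 1/6) * x)"
  proof -
    have ibia: "ib * ia = s^2 * ((1-al) * ((5/6 - 2 * al) + 2 * (1/2 * al - 1/6) * x))"
      unfolding ib_def ia_def by (simp add: power2_eq_square algebra_simps)
    show ?thesis unfolding ibia s unfolding rb_def ra_def by (simp add: field_simps power2_eq_square)
  qed
  define u1 where "u1 = -1/18 - 7 * al/3 + 5 * al^2"
  define v1 where "v1 = 2/9 + al/3 - 3 * al^2"
  have e1: "ra^2 + ia^2 - 1 = (1-x) * (u1 + v1 * x)"
    unfolding A u1_def v1_def by (simp add: field_simps power2_eq_square)
  have n1: "u1 + v1 * x \<ge> 0"
    by (rule lin_nonneg[OF x]) (use a2 al in \<open>simp_all add: u1_def v1_def\<close>)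
  have "(1-x) * (u1 + v1 * x) \<ge> 0" using n1 x by simp
  with e1 show "ra^2 + ia^2 \<ge> 1" by linarith
  define u2 where "u2 = 9/2 + 121 * al + 11 * al^2 - 24 * al^3 + 180 * al^4"
  define v2 where "v2 = -2 - 43 * al + 79 * al^2 + 24 * al^3 - 180 * al^4"
  have e2: "9 * (6 * al+1)^2 * (ra^2+ia^2) - (rc^2 + ic^2) * (4 * (6 * al-1)^2) = (1+x) * (u2 + v2 * x)"
    unfolding A C u2_def v2_def by (simp add: field_simps power2_eq_square power3_eq_cube power4_eq_xxxx)
  have n2: "u2 + v2 * x \<ge> 0"
    by (rule lin_nonneg[OF x]) (use a2 a3 a4 al in \<open>simp_all add: u2_def v2_def\<close>)
  have "(1+x) * (u2 + v2 * x) \<ge> 0" using n2 x by simp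
  with e2 show "(rc^2 + ic^2) * (4 * (6 * al-1)^2) \<le> 9 * (6 * al+1)^2 * (ra^2+ia^2)" by linarith
  define u3 where "u3 = 7/6 + 2 * al - 5 * al^2 + 6 * al^3"
  define v3 where "v3 = -2/3 + al + 5 * al^2 - 6 * al^3"
  have e3: "2 * (6 * al-1) * (rb * ra + ib * ia) - 3 * (2 * al-1) * (ra^2+ia^2) = (1+x) * (u3 + v3 * x)"
    unfolding A R u3_def v3_def by (simp add: field_simps power2_eq_square power3_eq_cube)
  have n3: "u3 + v3 * x \<ge> 0"
    by (rule lin_nonneg[OF x]) (use a2 a3 al in \<open>simp_all add: u3_def v3_def\<close>)
  have "(1+x) * (u3 + v3 * x) \<ge> 0" using n3 x by simp
  with e3 show "2 * (6 * al-1) * (rb * ra + ib * ia) \<ge> 3 * (2 * al-1) * (ra^2+ia^2)" by linarith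
qed


lemma SUP_max: "z \<in> S \<Longrightarrow> f z = M \<Longrightarrow> (\<And>x. x \<in> S \<Longrightarrow> f x \<le> M) \<Longrightarrow> (SUP x\<in>S. f x) = (M::real)"
  by (rule cSup_eq_maximum) auto

lemma INF_min: "z \<in> S \<Longrightarrow> f z = M \<Longrightarrow> (\<And>x. x \<in> S \<Longrightarrow> M \<le> f x) \<Longrightarrow> (INF x\<in>S. f x) = (M::real)"
  by (rule cInf_eq_minimum) auto

theorem mainTheorem4:
  fixes \<alpha> :: real
  assumes "\<alpha> \<ge> 1"
  defines "a \<equiv> [3/2*\<alpha> + 1/3, 5/6 - 2*\<alpha>, 1/2*\<alpha> - 1/6]"
      and "b \<equiv> [\<alpha>, 1 - \<alpha>, 0, 0]"
      and "c \<equiv> [2*\<alpha> + 1, -3*\<alpha>, \<alpha>]"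
  shows "sigmaF a = 1
       \<and> sigmaE a c = 3*(6*\<alpha> + 1) / (2*(6*\<alpha> - 1))
       \<and> lambdaI a b = 3*(2*\<alpha> - 1) / (2*(6*\<alpha> - 1))
       \<and> IIE a b c = (2*\<alpha> - 1) / (6*\<alpha> + 1)"
proof -
  note al = assms(1)
  have pos: "6 * \<alpha> - 1 > 0" using al by simp
  have cs: "(sin t)^2 = 1 - (cos t)^2" for t :: real by (rule sin_squared_eq)
  have H: "Re (trigpoly a t)^2 + Im (trigpoly a t)^2 \<ge> 1"
       "(Re (trigpoly c t)^2 + Im (trigpoly c t)^2) * (4 * (6 * \<alpha> - 1)^2)
          \<le> 9 * (6 * \<alpha> + 1)^2 * (Re (trigpoly a t)^2 + Im (trigpoly a t)^2)"
       "2 * (6 * \<alpha> - 1) * (Re (trigpoly b t) * Re (trigpoly a t) + Im (trigpoly b t) * Im (trigpoly a t))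
          \<ge> 3 * (2 * \<alpha> - 1) * (Re (trigpoly a t)^2 + Im (trigpoly a t)^2)" for t
    using alg[OF al cs[of t] cos_ge_minus_one cos_le_one]
    unfolding a_def b_def c_def trig3 trig4 by simp_all
  have na: "cmod (trigpoly a t) \<ge> 1" for t
  proof -
    have "1^2 \<le> cmod (trigpoly a t)^2" using H(1)[of t] by (simp add: cmod_power2)
    then show ?thesis by (rule power2_le_imp_le) simp
  qed
  have F: "cmod (1 / trigpoly a t) \<le> 1" for t
    using na[of t] by (simp add: norm_divide divide_le_eq)
  have E: "cmod (trigpoly c t / trigpoly a t) \<le> 3*(6*\<alpha> + 1) / (2*(6*\<alpha> - 1))" for t
  proof -
    have "(cmod (trigpoly c t) * (2 * (6 * \<alpha> - 1)))^2 \<le> (3 * (6 * \<alpha> + 1) * cmod (trigpoly a t))^2"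
    proof -
      have "(cmod (trigpoly c t) * (2 * (6 * \<alpha> - 1)))^2 = (Re (trigpoly c t)^2 + Im (trigpoly c t)^2) * (4 * (6 * \<alpha> - 1)^2)"
        by (simp only: power_mult_distrib cmod_power2) simp
      moreover have "(3 * (6 * \<alpha> + 1) * cmod (trigpoly a t))^2 = 9 * (6 * \<alpha> + 1)^2 * (Re (trigpoly a t)^2 + Im (trigpoly a t)^2)"
        by (simp only: power_mult_distrib cmod_power2) simp
      ultimately show ?thesis using H(2)[of t] by simp
    qed
    then have "cmod (trigpoly c t) * (2 * (6 * \<alpha> - 1)) \<le> 3 * (6 * \<alpha> + 1) * cmod (trigpoly a t)"
      by (rule power2_le_imp_le) (use al in simp)
    then show ?thesis using na[of t] pos by (simp add: norm_divide divide_le_eq le_divide_eq mult.commute)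
  qed
  have L: "Re (trigpoly b t / trigpoly a t) \<ge> 3*(2*\<alpha> - 1) / (2*(6*\<alpha> - 1))" for t
  proof -
    have "Re (trigpoly a t)^2 + Im (trigpoly a t)^2 > 0" using H(1)[of t] by linarith
    then show ?thesis using H(3)[of t] pos by (simp add: Re_divide divide_le_eq le_divide_eq mult.commute)
  qed
  have pi_mem: "pi \<in> {0..<2*pi}" using pi_gt_zero by simp
  have z_mem: "0 \<in> {0..<2*pi}" using pi_gt_zero by simp
  have a0: "trigpoly a 0 = 1" unfolding a_def trig3 by (simp add: complex_eq_iff)
  have api: "trigpoly a pi = of_real (2 * (6 * \<alpha> - 1) / 3)" unfolding a_def trig3 by (simp add: complex_eq_iff)
  have bpi: "trigpoly b pi = of_real (2 * \<alpha> - 1)" unfolding b_def trig4 by (simp add: complex_eq_iff)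
  have cpi: "trigpoly c pi = of_real (6 * \<alpha> + 1)" unfolding c_def trig3 by (simp add: complex_eq_iff)
  have sF: "sigmaF a = 1" unfolding sigmaF_def
    by (rule SUP_max[OF z_mem]) (simp_all add: a0 F)
  have sE: "sigmaE a c = 3*(6*\<alpha> + 1) / (2*(6*\<alpha> - 1))" unfolding sigmaE_def
  proof (rule SUP_max[OF pi_mem])
    show "cmod (trigpoly c pi / trigpoly a pi) = 3*(6*\<alpha> + 1) / (2*(6*\<alpha> - 1))"
    proof -
      have "trigpoly c pi / trigpoly a pi = of_real ((6 * \<alpha> + 1) / (2 * (6 * \<alpha> - 1) / 3))"
        unfolding api cpi by simp
      then have "cmod (trigpoly c pi / trigpoly a pi) = (6 * \<alpha> + 1) / (2 * (6 * \<alpha> - 1) / 3)"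
        using pos al by (simp only: norm_of_real) simp
      then show ?thesis using pos by (simp add: field_simps)
    qed
  qed (rule E)
  have lI: "lambdaI a b = 3*(2*\<alpha> - 1) / (2*(6*\<alpha> - 1))" unfolding lambdaI_def
  proof (rule INF_min[OF pi_mem])
    show "Re (trigpoly b pi / trigpoly a pi) = 3*(2*\<alpha> - 1) / (2*(6*\<alpha> - 1))"
      unfolding api bpi using pos by (simp add: field_simps flip: of_real_divide)
  qed (rule L)
  have "IIE a b c = (2*\<alpha> - 1) / (6*\<alpha> + 1)"
  proof -
    have d: "(p/d)/(q/d) = p/q" if "d \<noteq> 0" for p q d :: real
      using that by (cases "q = 0") (simp_all add: field_simps)
    have "IIE a b c = (3*(2*\<alpha> - 1)) / (3*(6*\<alpha> + 1))"
      unfolding IIE_def sE lI by (rule d) (use pos in simp)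
    then show ?thesis by (simp only: mult_divide_mult_cancel_left_if) simp
  qed
  with sF sE lI show ?thesis by simp
qed
end
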